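(* Let $G=(V,E)$ be a $2$-edge-strongly biconnected directed graph. Then the directed graph output by Algorithm A (described in the context) on input $G$ is $2$-edge-strongly biconnected.
   Context: A directed graph is strongly biconnected if it is strongly connected and its underlying undirected graph (ignoring edge directions) is biconnected. A strongly biconnected component of a directed graph is a maximal strongly biconnected subgraph. A strongly biconnected directed graph $G=(V,E)$ is $2$-edge-strongly biconnected if it has at least three vertices and $(V,E\setminus\{e\})$ is strongly biconnected for every $e\in E$. For a directed graph $D=(V,F)$, an edge $e\in F$ is a b-bridge if $(V,F\setminus\{e\})$ is not strongly biconnected. A directed graph is $2$-edge-connected if it is strongly connected and remains strongly connected after deleting any single edge. Algorithm A, on input a $2$-edge-strongly biconnected directed graph $G=(V,E)$: (1) Choose $U\subseteq E$ such that $H=(V,U)$ is a minimal $2$-edge-connected spanning subgraph of $G$ (i.e. $H$ is $2$-edge-connected and deleting any edge of $U$ destroys $2$-edge-connectivity). (2) If $H$ is $2$-edge-strongly biconnected, output $H$ and stop. (3) Otherwise set $E_{2e}:=U$. While the underlying undirected graph of $(V,E_{2e})$ is not biconnected: compute the strongly biconnected components of $(V,E_{2e})$, find an edge $(v,w)\in E\setminus E_{2e}$ such that $v,w$ are not in the same strongly biconnected component of $(V,E_{2e})$, and add $(v,w)$ to $E_{2e}$. (4) Compute the set of b-bridges of $(V,E_{2e})$. For each such b-bridge $t$: while the underlying undirected graph of $(V,E_{2e}\setminus\{t\})$ is not biconnected, compute the strongly biconnected components of $(V,E_{2e}\setminus\{t\})$, find an edge $(u,w)\in E\setminus E_{2e}$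 such that $u,w$ are not in the same strongly biconnected component of $(V,E_{2e}\setminus\{t\})$, and add $(u,w)$ to $E_{2e}$. (5) Output $(V,E_{2e})$. *)

theory Defs
  imports Main
begin

definition digraph :: "'a set \<Rightarrow> ('a \<times> 'a) set \<Rightarrow> bool" where
  "digraph V E \<longleftrightarrow> finite V \<and> E \<subseteq> V \<times> V"

definition strongly_connected :: "'a set \<Rightarrow> ('a \<times> 'a) set \<Rightarrow> bool" where
  "strongly_connected V E \<longleftrightarrow> (\<forall>u\<in>V. \<forall>v\<in>V. (u, v) \<in> (E \<inter> (V \<times> V))\<^sup>*)"

definition und_edges :: "'a set \<Rightarrow> ('a \<times> 'a) set \<Rightarrow> ('a \<times> 'a) set" where
  "und_edges W E = {(u, v). u \<in> W \<and> v \<in> W \<and> ((u, v) \<in> E \<or> (v, u) \<in> E)}"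

definition und_connected :: "'a set \<Rightarrow> ('a \<times> 'a) set \<Rightarrow> bool" where
  "und_connected W E \<longleftrightarrow> (\<forall>u\<in>W. \<forall>v\<in>W. (u, v) \<in> (und_edges W E)\<^sup>*)"

definition und_biconnected :: "'a set \<Rightarrow> ('a \<times> 'a) set \<Rightarrow> bool" where
  "und_biconnected V E \<longleftrightarrow> und_connected V E \<and> (\<forall>x\<in>V. und_connected (V - {x}) E)"

definition strongly_biconnected :: "'a set \<Rightarrow> ('a \<times> 'a) set \<Rightarrow> bool" where
  "strongly_biconnected V E \<longleftrightarrow> strongly_connected V E \<and> und_biconnected V E"

definition is_subgraph :: "'a set \<Rightarrow> ('a \<times> 'a) set \<Rightarrow> 'a set \<Rightarrow> ('a \<times> 'a) set \<Rightarrow> bool" where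
  "is_subgraph V' E' V E \<longleftrightarrow> V' \<subseteq> V \<and> E' \<subseteq> E \<inter> (V' \<times> V')"

definition is_sbc :: "'a set \<Rightarrow> ('a \<times> 'a) set \<Rightarrow> 'a set \<Rightarrow> ('a \<times> 'a) set \<Rightarrow> bool" where
  "is_sbc V E V' E' \<longleftrightarrow> is_subgraph V' E' V E \<and> strongly_biconnected V' E' \<and>
     (\<forall>V'' E''. is_subgraph V'' E'' V E \<and> strongly_biconnected V'' E'' \<and>
        V' \<subseteq> V'' \<and> E' \<subseteq> E'' \<longrightarrow> V'' = V' \<and> E'' = E')"

definition same_sbc :: "'a set \<Rightarrow> ('a \<times> 'a) set \<Rightarrow> 'a \<Rightarrow> 'a \<Rightarrow> bool" where
  "same_sbc V E v w \<longleftrightarrow> (\<exists>V' E'. is_sbc V E V' E' \<and> v \<in> V' \<and> w \<in> V')"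

definition two_edge_connected :: "'a set \<Rightarrow> ('a \<times> 'a) set \<Rightarrow> bool" where
  "two_edge_connected V E \<longleftrightarrow> strongly_connected V E \<and>
     (\<forall>e\<in>E. strongly_connected V (E - {e}))"

definition two_edge_sb :: "'a set \<Rightarrow> ('a \<times> 'a) set \<Rightarrow> bool" where
  "two_edge_sb V E \<longleftrightarrow> strongly_biconnected V E \<and> card V \<ge> 3 \<and>
     (\<forall>e\<in>E. strongly_biconnected V (E - {e}))"

definition b_bridge :: "'a set \<Rightarrow> ('a \<times> 'a) set \<Rightarrow> ('a \<times> 'a) \<Rightarrow> bool" where
  "b_bridge V F e \<longleftrightarrow> e \<in> F \<and> \<not> strongly_biconnected V (F - {e})"

definition min_2ec_spanning :: "'a set \<Rightarrow> ('a \<times> 'a) set \<Rightarrow> ('a \<times> 'a) set \<Rightarrow> bool" where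
  "min_2ec_spanning V E U \<longleftrightarrow> U \<subseteq> E \<and> two_edge_connected V U \<and>
     (\<forall>e\<in>U. \<not> two_edge_connected V (U - {e}))"

text \<open>One iteration of the while loop of step (3).\<close>
definition step3 :: "'a set \<Rightarrow> ('a \<times> 'a) set \<Rightarrow> (('a \<times> 'a) set \<times> ('a \<times> 'a) set) set" where
  "step3 V E = {(F, insert (v, w) F) | F v w.
      \<not> und_biconnected V F \<and> (v, w) \<in> E - F \<and> \<not> same_sbc V F v w}"

text \<open>One iteration of the inner while loop of step (4) for the b-bridge t.\<close>
definition step4 :: "'a set \<Rightarrow> ('a \<times> 'a) set \<Rightarrow> ('a \<times> 'a) \<Rightarrow>
    (('a \<times> 'a) set \<times> ('a \<times> 'a) set) set" where
  "step4 V E t = {(F, insert (u, w) F) | F u w.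
      \<not> und_biconnected V (F - {t}) \<and> (u, w) \<in> E - F \<and> \<not> same_sbc V (F - {t}) u w}"

text \<open>Processing the b-bridges in the order given by the list (a full run of the
  inner while loop for each of them, in turn).\<close>
inductive process_bridges :: "'a set \<Rightarrow> ('a \<times> 'a) set \<Rightarrow> ('a \<times> 'a) list \<Rightarrow>
    ('a \<times> 'a) set \<Rightarrow> ('a \<times> 'a) set \<Rightarrow> bool" for V E where
  Nil: "process_bridges V E [] F F"
| Cons: "(F, F1) \<in> (step4 V E t)\<^sup>* \<Longrightarrow> und_biconnected V (F1 - {t}) \<Longrightarrow>
         process_bridges V E ts F1 F2 \<Longrightarrow> process_bridges V E (t # ts) F F2"

text \<open>H is a possible output (edge set; the vertex set is V) of Algorithm A on
  input (V, E), for some admissible choices made by the algorithm.\<close>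
definition algA_output :: "'a set \<Rightarrow> ('a \<times> 'a) set \<Rightarrow> ('a \<times> 'a) set \<Rightarrow> bool" where
  "algA_output V E H \<longleftrightarrow>
     (\<exists>U. min_2ec_spanning V E U \<and>
        ((two_edge_sb V U \<and> H = U) \<or>
         (\<not> two_edge_sb V U \<and>
          (\<exists>F2 ts. (U, F2) \<in> (step3 V E)\<^sup>* \<and> und_biconnected V F2 \<and>
             distinct ts \<and> set ts = {t. b_bridge V F2 t} \<and>
             process_bridges V E ts F2 H))))"

end

theory Submission
  imports Defs
begin

lemma sc_mono: "strongly_connected V A \<Longrightarrow> A \<subseteq> B \<Longrightarrow> strongly_connected V B"
  unfolding strongly_connected_def
  by (meson Int_mono order_refl rtrancl_mono subsetD)

lemma uc_mono: "und_connected W A \<Longrightarrow> A \<subseteq> B \<Longrightarrow> und_connected W B"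
proof -
  assume a: "und_connected W A" "A \<subseteq> B"
  have "und_edges W A \<subseteq> und_edges W B" using a(2) unfolding und_edges_def by auto
  then show ?thesis using a(1) unfolding und_connected_def by (meson rtrancl_mono subsetD)
qed

lemma ub_mono: "und_biconnected V A \<Longrightarrow> A \<subseteq> B \<Longrightarrow> und_biconnected V B"
  unfolding und_biconnected_def using uc_mono by blast

lemma step3_sub: "(F, G) \<in> (step3 V E)\<^sup>* \<Longrightarrow> F \<subseteq> G"
  by (induction rule: rtrancl_induct) (auto simp: step3_def)

lemma step4_sub: "(F, G) \<in> (step4 V E t)\<^sup>* \<Longrightarrow> F \<subseteq> G"
  by (induction rule: rtrancl_induct) (auto simp: step4_def)

lemma pb: "process_bridges V E ts F H \<Longrightarrow> F \<subseteq> H \<and> (\<forall>t\<in>set ts. und_biconnected V (H - {t}))"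
proof (induction rule: process_bridges.induct)
  case (Nil F)
  then show ?case by simp
next
  case (Cons F F1 t ts F2)
  have s: "F \<subseteq> F1" using Cons(1) by (rule step4_sub)
  have "und_biconnected V (F2 - {t})" using Cons(2) Cons.IH ub_mono[of V "F1 - {t}" "F2 - {t}"] by blast
  then show ?case using Cons.IH s by auto
qed

theorem mainTheorem2:
  fixes V :: "'a set" and E H :: "('a \<times> 'a) set"
  assumes "digraph V E"
    and "two_edge_sb V E"
    and "algA_output V E H"
  shows "two_edge_sb V H"
proof -
  obtain U where U: "min_2ec_spanning V E U" and
    c: "(two_edge_sb V U \<and> H = U) \<or>
         (\<not> two_edge_sb V U \<and>
          (\<exists>F2 ts. (U, F2) \<in> (step3 V E)\<^sup>* \<and> und_biconnected V F2 \<and>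
             distinct ts \<and> set ts = {t. b_bridge V F2 t} \<and>
             process_bridges V E ts F2 H))"
    using assms(3) unfolding algA_output_def by blast
  show ?thesis
  proof (cases "two_edge_sb V U \<and> H = U")
    case True then show ?thesis by simp
  next
    case False
    then obtain F2 ts where f: "(U, F2) \<in> (step3 V E)\<^sup>*" "und_biconnected V F2"
       "set ts = {t. b_bridge V F2 t}" "process_bridges V E ts F2 H" using c by blast
    have UF: "U \<subseteq> F2" using f(1) by (rule step3_sub)
    from pb[OF f(4)] have FH: "F2 \<subseteq> H" and br: "\<forall>t\<in>set ts. und_biconnected V (H - {t})" by auto
    have tec: "two_edge_connected V U" using U unfolding min_2ec_spanning_def by blast
    have card: "card V \<ge> 3" using assms(2) unfolding two_edge_sb_def by blast
    have scH: "strongly_connected V H"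
      using tec UF FH sc_mono unfolding two_edge_connected_def by blast
    have ubH: "und_biconnected V H" using f(2) FH ub_mono by blast
    have "strongly_biconnected V (H - {e})" if e: "e \<in> H" for e
    proof -
      have sc: "strongly_connected V (H - {e})"
      proof (cases "e \<in> U")
        case True
        then have "strongly_connected V (U - {e})" using tec unfolding two_edge_connected_def by blast
        then show ?thesis using UF FH sc_mono[of V "U - {e}" "H - {e}"] by blast
      next
        case False
        then have "U \<subseteq> H - {e}" using UF FH by blast
        then show ?thesis using tec sc_mono unfolding two_edge_connected_def by blast
      qed
      have ub: "und_biconnected V (H - {e})"
      proof (cases "e \<in> F2")
        case False
        then have "F2 \<subseteq> H - {e}" using FH by blast
        then show ?thesis using f(2) ub_mono by blast
      next
        case True
        show ?thesis
        proof (cases "b_bridge V F2 e")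
          case True
          then show ?thesis using br f(3) by blast
        next
          case False
          then have "und_biconnected V (F2 - {e})" using True
            unfolding b_bridge_def strongly_biconnected_def by blast
          then show ?thesis using FH ub_mono[of V "F2 - {e}" "H - {e}"] by blast
        qed
      qed
      show ?thesis using sc ub unfolding strongly_biconnected_def by blast
    qed
    then show ?thesis using scH ubH card unfolding two_edge_sb_def strongly_biconnected_def by blast
  qed
qed

end
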